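(* Let $R>1$ and $f\in H(\mathbb{D}_R)$. Then for any $r$ with $0<r<R$, \[\lim_{q\to1^+}L_q(f;z)=L_1(f;z)\] uniformly on $\{z:|z|\le r\}$.
   Context: $\mathbb{D}_R=\{z\in\mathbb{C}:|z|<R\}$, $H(\mathbb{D}_R)$ the analytic functions on it. For $p>0$, $p\ne1$, $D_pf(z)=\frac{f(pz)-f(z)}{(p-1)z}$ for $z\ne0$ and $D_pf(0)=f'(0)$. For $q>1$ and $|z|<R/q^2$, $L_q(f;z)=\frac{(1-z)\,q\,(D_qf(z)-D_{q^{-1}}f(z))}{q-1}$ (for any fixed $z$ this is defined for all $q>1$ close enough to $1$), and $L_1(f;z)=f''(z)\,z(1-z)$. *)

theory Defs
  imports "HOL-Complex_Analysis.Complex_Analysis"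
begin

definition Dq :: "(complex \<Rightarrow> complex) \<Rightarrow> real \<Rightarrow> complex \<Rightarrow> complex" where
  "Dq f p z = (if z = 0 then deriv f 0
               else (f (complex_of_real p * z) - f z) / ((complex_of_real p - 1) * z))"

definition Lq :: "(complex \<Rightarrow> complex) \<Rightarrow> real \<Rightarrow> complex \<Rightarrow> complex" where
  "Lq f q z = (1 - z) * complex_of_real q * (Dq f q z - Dq f (1 / q) z) / (complex_of_real q - 1)"

definition L1 :: "(complex \<Rightarrow> complex) \<Rightarrow> complex \<Rightarrow> complex" where
  "L1 f z = deriv (deriv f) z * z * (1 - z)"

end

theory Submission
  imports Defs
begin

lemma alg:
  fixes Q z u v a0 a1 a2 :: complex
  assumes Q0: "Q \<noteq> 0" and Q1: "Q \<noteq> 1" and z0: "z \<noteq> 0"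
  shows "(1-z)*Q*((u-a0)/((Q-1)*z) - (v-a0)/((1/Q-1)*z))/(Q-1) - a2*z*(1-z)
   = (1-z)*a2*z*(Q-1)/2 + (1-z)*Q*((u - (a0 + a1*((Q-1)*z) + a2*((Q-1)*z)^2/2))
      + Q*(v - (a0 + a1*(-((Q-1)*z)/Q) + a2*(-((Q-1)*z)/Q)^2/2)))/((Q-1)^2*z)"
proof -
  have q1: "Q - 1 \<noteq> 0" using Q1 by simp
  define h where "h = (Q-1)*z"
  define E1 where "E1 = u - (a0 + a1*h + a2*h^2/2)"
  define E2 where "E2 = v - (a0 + a1*(-h/Q) + a2*(-h/Q)^2/2)"
  have u: "u = a0 + a1*h + a2*h^2/2 + E1" and v: "v = a0 + a1*(-h/Q) + a2*(-h/Q)^2/2 + E2"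
    by (simp_all add: E1_def E2_def)
  have e1: "(v-a0)/((1/Q-1)*z) = -(Q*(v-a0))/((Q-1)*z)"
    using Q0 q1 z0 by (simp add: field_simps)
  have "(1-z)*Q*((u-a0)/((Q-1)*z) - (v-a0)/((1/Q-1)*z))/(Q-1) = (1-z)*Q*(((u-a0) + Q*(v-a0))/((Q-1)*z))/(Q-1)"
    unfolding e1 by (simp add: add_divide_distrib)
  also have "\<dots> = (1-z)*Q*((u-a0) + Q*(v-a0))/((Q-1)^2*z)"
    by (simp add: power2_eq_square mult.commute mult.left_commute)
  also have "(u-a0) + Q*(v-a0) = a2*h^2/2*(1+1/Q) + (E1 + Q*E2)"
    unfolding u v using Q0 by (simp add: field_simps power2_eq_square)
  also have "(1-z)*Q*(a2*h^2/2*(1+1/Q) + (E1 + Q*E2))/((Q-1)^2*z)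
     = (1-z)*a2*z*(Q+1)/2 + (1-z)*Q*(E1 + Q*E2)/((Q-1)^2*z)"
  proof -
    have hz: "h^2/((Q-1)^2*z) = z" unfolding h_def using q1 z0 by (simp add: power2_eq_square)
    have "(1-z)*Q*(a2*h^2/2*(1+1/Q) + (E1 + Q*E2))/((Q-1)^2*z)
       = (1-z)*Q*(a2/2*(1+1/Q))*(h^2/((Q-1)^2*z)) + (1-z)*Q*(E1 + Q*E2)/((Q-1)^2*z)"
      using q1 z0 Q0 by (simp add: field_simps)
    also have "\<dots> = (1-z)*a2*z*(Q+1)/2 + (1-z)*Q*(E1 + Q*E2)/((Q-1)^2*z)"
      unfolding hz using Q0 by (simp add: field_simps)
    finally show ?thesis .
  qed
  finally have eq: "(1-z)*Q*((u-a0)/((Q-1)*z) - (v-a0)/((1/Q-1)*z))/(Q-1)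
     = (1-z)*a2*z*(Q+1)/2 + (1-z)*Q*(E1 + Q*E2)/((Q-1)^2*z)" .
  have id: "(1-z)*a2*z*(Q+1)/2 - a2*z*(1-z) = (1-z)*a2*z*(Q-1)/2"
    by (simp add: field_simps)
  have lin: "\<And>L A W Y Z::complex. L = A + W \<Longrightarrow> A - Y = Z \<Longrightarrow> L - Y = Z + W" by simp
  from lin[OF eq id] show ?thesis unfolding E1_def E2_def h_def .
qed

lemma taylor2:
  fixes f :: "complex \<Rightarrow> complex"
  assumes hol: "f holomorphic_on ball 0 R" and rho: "\<rho> < R"
    and B: "\<And>x. x \<in> cball 0 \<rho> \<Longrightarrow> cmod ((deriv ^^ 3) f x) \<le> B"
    and w: "w \<in> cball 0 \<rho>" and z: "z \<in> cball 0 \<rho>"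
  shows "cmod (f z - (f w + deriv f w * (z-w) + deriv (deriv f) w * (z-w)^2/2)) \<le> B * cmod (z-w)^3/2"
proof -
  have sub: "cball 0 \<rho> \<subseteq> ball 0 R" using rho by auto
  have d: "((deriv ^^ i) f has_field_derivative (deriv ^^ Suc i) f x) (at x within cball 0 \<rho>)"
    if "x \<in> cball 0 \<rho>" for i x
  proof -
    have "x \<in> ball 0 R" using sub that by blast
    from holomorphic_derivI[OF holomorphic_higher_deriv[OF hol open_ball, of i] open_ball this]
    show ?thesis by simp
  qed
  have "cmod ((deriv ^^ 0) f z - (\<Sum>i\<le>2. (deriv ^^ i) f w * (z-w) ^ i / (fact i))) \<le> B * cmod(z - w)^(Suc 2) / fact 2"
    apply (rule complex_Taylor[where f="\<lambda>i. (deriv ^^ i) f" and n=2 and S="cball 0 \<rho>", OF convex_cball])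
    using d B w z by (auto simp: numeral_3_eq_3)
  then show ?thesis by (simp add: numeral_2_eq_2 numeral_3_eq_3 algebra_simps)
qed


lemma canc: fixes A C B P Y :: real assumes "P \<noteq> 0"
  shows "A*(C*(B*(P*Y)/2))/P = A*C*B*Y/2" using assms by (simp add: field_simps)

lemma pointwise:
  fixes f :: "complex \<Rightarrow> complex"
  assumes hol: "f holomorphic_on ball 0 R" and rho: "\<rho> < R" and rpos: "0 < r"
    and B3: "\<And>x. x \<in> cball 0 \<rho> \<Longrightarrow> cmod ((deriv ^^ 3) f x) \<le> B3"
    and B2: "\<And>x. x \<in> cball 0 r \<Longrightarrow> cmod (deriv (deriv f) x) \<le> B2"
    and q: "1 < q" "q \<le> 2" "q * r \<le> \<rho>" and z: "cmod z \<le> r"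
  shows "cmod (Lq f q z - L1 f z) \<le> (q-1)*((1+r)*(B2*r/2 + 3*B3*r^2))"
proof (cases "z = 0")
  case True
  have "cmod (deriv (deriv f) 0) \<le> B2" by (rule B2) (use rpos in simp)
  then have b2: "0 \<le> B2" by (rule order_trans[OF norm_ge_zero])
  have "0 < q * r" using q rpos by simp
  then have "cmod ((deriv ^^ 3) f 0) \<le> B3" using q by (intro B3) simp
  then have b3: "0 \<le> B3" by (rule order_trans[OF norm_ge_zero])
  have "0 \<le> (q-1)*((1+r)*(B2*r/2 + 3*B3*r^2))" using b2 b3 q rpos by simp
  moreover
  moreover have "Lq f q z = 0" "L1 f z = 0" using True by (simp_all add: Lq_def L1_def Dq_def)
  ultimately show ?thesis by simp
next
  case False
  define Q where "Q = complex_of_real q"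
  define a0 where "a0 = f z"
  define a1 where "a1 = deriv f z"
  define a2 where "a2 = deriv (deriv f) z"
  define h where "h = (Q-1)*z"
  define E1 where "E1 = f (Q*z) - (a0 + a1*h + a2*h^2/2)"
  define E2 where "E2 = f ((1/Q)*z) - (a0 + a1*(-h/Q) + a2*(-h/Q)^2/2)"
  have Q0: "Q \<noteq> 0" and Q1: "Q \<noteq> 1" using q by (auto simp: Q_def)
  have r0: "0 \<le> r" using rpos by simp
  have nQ: "cmod Q = q" using q by (simp add: Q_def)
  have "Q - 1 = complex_of_real (q - 1)" by (simp add: Q_def)
  then have "cmod (Q - 1) = \<bar>q - 1\<bar>" by (simp only: norm_of_real)
  then have nQ1: "cmod (Q - 1) = q - 1" using q by simp
  have "r \<le> q * r" using q rpos by simp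
  then have zin: "z \<in> cball 0 \<rho>" using z q by simp
  have Qzin: "Q*z \<in> cball 0 \<rho>"
  proof -
    have "cmod (Q*z) = q * cmod z" by (simp add: norm_mult nQ)
    also have "\<dots> \<le> q * r" using z q by simp
    finally show ?thesis using q by simp
  qed
  have zQin: "(1/Q)*z \<in> cball 0 \<rho>"
  proof -
    have "cmod ((1/Q)*z) = cmod z / q" by (simp add: norm_mult norm_divide nQ)
    also have "\<dots> \<le> cmod z" using q by (simp add: divide_le_eq mult_le_cancel_left1)
    finally show ?thesis using zin by simp
  qed
  have qzh: "Q*z - z = h" by (simp add: h_def algebra_simps)
  have e1: "cmod E1 \<le> B3 * cmod h ^ 3 / 2"
    using taylor2[OF hol rho B3 zin Qzin] unfolding E1_def a0_def a1_def a2_def qzh .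
  have hh: "(1/Q)*z - z = -h/Q" unfolding h_def using Q0 by (simp add: field_simps)
  have tt: "cmod (f ((1/Q)*z) - (f z + deriv f z * (-h/Q) + deriv (deriv f) z * (-h/Q)^2/2)) \<le> B3 * cmod (-h/Q)^3/2"
    using taylor2[OF hol rho B3 zin zQin] unfolding hh .
  have nn: "cmod (-h/Q) = cmod (h/Q)" by (simp add: norm_divide)
  have e2: "cmod E2 \<le> B3 * cmod (h/Q) ^ 3 / 2"
    using tt unfolding nn E2_def a0_def a1_def a2_def .
  have LqE: "Lq f q z = (1-z)*Q*((f (Q*z)-a0)/((Q-1)*z) - (f ((1/Q)*z)-a0)/((1/Q-1)*z))/(Q-1)"
    using False by (simp add: Lq_def Dq_def Q_def a0_def)
  have L1E: "L1 f z = a2*z*(1-z)" by (simp add: L1_def a2_def)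
  have main: "Lq f q z - L1 f z = (1-z)*a2*z*(Q-1)/2 + (1-z)*Q*(E1 + Q*E2)/((Q-1)^2*z)"
    unfolding LqE L1E E1_def E2_def h_def by (rule alg[OF Q0 Q1 False])
  have "0 < q * r" using q rpos by simp
  then have "cmod ((deriv ^^ 3) f 0) \<le> B3" using q by (intro B3) simp
  then have b3: "0 \<le> B3" by (rule order_trans[OF norm_ge_zero])
  define nz where "nz = cmod z"
  have nz0: "0 < nz" "nz \<le> r" using False z by (auto simp: nz_def)
  have hn: "cmod h = (q-1)*nz" by (simp add: h_def norm_mult nQ1 nz_def)
  have hQ: "cmod (h/Q) \<le> cmod h"
  proof -
    have "cmod h \<le> cmod h * q" using q by (simp add: mult_le_cancel_left1)
    then show ?thesis using q by (simp add: norm_divide nQ divide_le_eq)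
  qed
  have z1: "cmod (1 - z) \<le> 1 + r"
    using norm_triangle_ineq4[of 1 z] z by simp
  have a2b: "cmod a2 \<le> B2" unfolding a2_def by (rule B2) (use z in simp)
  have b2: "0 \<le> B2" using a2b by (rule order_trans[OF norm_ge_zero])
  have t1: "cmod ((1-z)*a2*z*(Q-1)/2) \<le> (q-1)*((1+r)*(B2*r/2))"
  proof -
    have "cmod ((1-z)*a2*z*(Q-1)/2) = cmod (1-z)*cmod a2*nz*(q-1)/2"
      by (simp add: norm_mult norm_divide nQ1 nz_def)
    also have "\<dots> \<le> (1+r)*B2*r*(q-1)/2"
      using z1 a2b b2 rpos nz0 q by (intro divide_right_mono mult_mono) auto
    finally show ?thesis by (simp add: algebra_simps)
  qed
  have eE: "cmod (E1 + Q*E2) \<le> (1+q)*(B3*((q-1)*nz)^3/2)"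
  proof -
    have "cmod (E1 + Q*E2) \<le> cmod E1 + q * cmod E2"
      using norm_triangle_ineq[of E1 "Q*E2"] by (simp add: norm_mult nQ)
    also have "\<dots> \<le> B3*((q-1)*nz)^3/2 + q * (B3*((q-1)*nz)^3/2)"
    proof (intro add_mono mult_left_mono)
      show "cmod E1 \<le> B3*((q-1)*nz)^3/2" using e1 hn by simp
      have "cmod (h/Q)^3 \<le> cmod h ^3" using hQ by (intro power_mono) auto
      then have "B3 * cmod (h/Q)^3/2 \<le> B3 * cmod h ^3/2" using b3 by (intro divide_right_mono mult_left_mono) auto
      then show "cmod E2 \<le> B3*((q-1)*nz)^3/2" using e2 hn by simp
    qed (use q in auto)
    finally show ?thesis by (simp add: algebra_simps)
  qed
  have t2: "cmod ((1-z)*Q*(E1 + Q*E2)/((Q-1)^2*z)) \<le> (q-1)*((1+r)*(3*B3*r^2))"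
  proof -
    have "cmod ((1-z)*Q*(E1 + Q*E2)/((Q-1)^2*z)) = cmod (1-z)*q*cmod (E1 + Q*E2)/((q-1)^2*nz)"
      by (simp add: norm_mult norm_divide nQ nQ1 nz_def norm_power)
    also have "\<dots> \<le> cmod (1-z)*q*((1+q)*(B3*((q-1)*nz)^3/2))/((q-1)^2*nz)"
      using eE q nz0 by (intro divide_right_mono mult_left_mono) auto
    also have "\<dots> = cmod (1-z)*(q*(1+q))*B3*(q-1)*nz^2/2"
    proof -
      have d: "(q-1)^2*nz \<noteq> 0" using q nz0 by simp
      have "((q-1)*nz)^3 = ((q-1)^2*nz)*((q-1)*nz^2)" by (simp add: power2_eq_square power3_eq_cube)
      then have "cmod (1-z)*q*((1+q)*(B3*((q-1)*nz)^3/2))/((q-1)^2*nz)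
         = (cmod (1-z)*q)*((1+q)*(B3*(((q-1)^2*nz)*((q-1)*nz^2))/2))/((q-1)^2*nz)"
        by (simp only: mult.assoc)
      also have "\<dots> = (cmod (1-z)*q)*(1+q)*B3*((q-1)*nz^2)/2"
        by (rule canc[OF d])
      finally show ?thesis by (simp add: algebra_simps)
    qed
    also have "\<dots> \<le> (1+r)*(2*3)*B3*(q-1)*r^2/2"
    proof -
      have "q*(1+q) \<le> 2*3" using q by (intro mult_mono) auto
      moreover have "nz^2 \<le> r^2" using nz0 by (intro power_mono) auto
      ultimately show ?thesis using z1 b3 q nz0 rpos
        by (intro divide_right_mono mult_mono) auto
    qed
    finally show ?thesis by (simp add: algebra_simps)
  qed
  have "cmod (Lq f q z - L1 f z) \<le> cmod ((1-z)*a2*z*(Q-1)/2) + cmod ((1-z)*Q*(E1 + Q*E2)/((Q-1)^2*z))"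
    unfolding main by (rule norm_triangle_ineq)
  also have "\<dots> \<le> (q-1)*((1+r)*(B2*r/2)) + (q-1)*((1+r)*(3*B3*r^2))"
    by (rule add_mono[OF t1 t2])
  finally show ?thesis by (simp add: algebra_simps)
qed


lemma bound_on:
  fixes g :: "complex \<Rightarrow> complex"
  assumes "g holomorphic_on ball 0 R" "s < R"
  obtains B where "\<And>x. x \<in> cball 0 s \<Longrightarrow> cmod (g x) \<le> B"
proof -
  have "cball 0 s \<subseteq> ball 0 R" using assms by auto
  then have "continuous_on (cball 0 s) g"
    using holomorphic_on_imp_continuous_on[OF assms(1)] continuous_on_subset by blast
  then have "compact (g ` cball 0 s)" by (intro compact_continuous_image) auto
  then have "bounded (g ` cball 0 s)" by (rule compact_imp_bounded)
  then obtain B where "\<And>y. y \<in> g ` cball 0 s \<Longrightarrow> norm y \<le> B" by (auto simp: bounded_iff)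
  then show ?thesis using that by blast
qed

theorem mainTheorem4:
  fixes f :: "complex \<Rightarrow> complex" and R r :: real
  assumes "R > 1" and "f holomorphic_on ball 0 R" and "0 < r" and "r < R"
  shows "uniform_limit (cball 0 r) (\<lambda>q z. Lq f q z) (\<lambda>z. L1 f z) (at_right 1)"
proof -
  note hol = assms(2)
  define \<rho> where "\<rho> = (r + R) / 2"
  have rho: "\<rho> < R" "r < \<rho>" using assms by (auto simp: \<rho>_def)
  obtain B3 where B3: "\<And>x. x \<in> cball 0 \<rho> \<Longrightarrow> cmod ((deriv ^^ 3) f x) \<le> B3"
    using bound_on[OF holomorphic_higher_deriv[OF hol open_ball] rho(1)] by blast
  obtain B2 where B2': "\<And>x. x \<in> cball 0 r \<Longrightarrow> cmod ((deriv ^^ 2) f x) \<le> B2"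
    using bound_on[OF holomorphic_higher_deriv[OF hol open_ball] assms(4)] by blast
  have B2: "\<And>x. x \<in> cball 0 r \<Longrightarrow> cmod (deriv (deriv f) x) \<le> B2"
    using B2' by (simp add: numeral_2_eq_2)
  have b2: "0 \<le> B2" using B2[of 0] assms(3) by (intro order_trans[OF norm_ge_zero]) auto
  have b3: "0 \<le> B3" using B3[of 0] rho assms(3) by (intro order_trans[OF norm_ge_zero]) auto
  define C where "C = (1+r)*(B2*r/2 + 3*B3*r^2)"
  have C0: "0 \<le> C" unfolding C_def using b2 b3 assms(3) by simp
  show ?thesis
    unfolding uniform_limit_iff
  proof (intro allI impI)
    fix e :: real assume e: "0 < e"
    define b where "b = min 2 (min (\<rho>/r) (1 + e/(C+1)))"
    have b1: "1 < b" unfolding b_def using rho assms(3) e C0 by (simp add: field_simps)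
    show "\<forall>\<^sub>F q in at_right 1. \<forall>z\<in>cball 0 r. dist (Lq f q z) (L1 f z) < e"
      unfolding eventually_at_right_field
    proof (intro exI[of _ b] conjI allI impI ballI b1)
      fix q :: real and z :: complex assume q1: "1 < q" and qb: "q < b" and z: "z \<in> cball 0 r"
      have q2: "q \<le> 2" using qb by (simp add: b_def)
      have "q < \<rho>/r" using qb by (simp add: b_def)
      then have qr: "q * r \<le> \<rho>" using assms(3) by (simp add: field_simps)
      have "q - 1 < e/(C+1)" using qb by (simp add: b_def)
      then have qe: "(q-1)*(C+1) < e" using C0 by (simp add: field_simps)
      have zr: "cmod z \<le> r" using z by simp
      have "dist (Lq f q z) (L1 f z) \<le> (q-1)*C"
        unfolding dist_norm C_def
        by (rule pointwise[OF hol rho(1) assms(3) B3 B2 q1 q2 qr]) (simp_all add: zr)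
      also have "\<dots> \<le> (q-1)*(C+1)" using q1 by simp
      finally show "dist (Lq f q z) (L1 f z) < e" using qe by simp
    qed
  qed
qed

end
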